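(* Let $U$ be a rise function, $m\ge1$, $\varepsilon_r\ge0$ and $\sigma_r\ge0$ for $r\in\{1,\dots,m\}$, $\varepsilon=\sum_{r=1}^m\varepsilon_r$, $\sigma_l\ge0$, and let $\sigma_u\ge0$ be such that $\bigodot_{r=1}^m(S_{\sigma_r}\circ H_{\varepsilon_r})(\phi)\le H_\varepsilon\circ S_{\sigma_u}(\phi)$. Let $\psi\le\phi$, and assume all phases and pulse strengths occurring in the compositions below lie in the range where the defining condition of icpd/dcpd applies. If $U$ is icpd then $$S_{\sigma_l}\circ H_\varepsilon(\phi)-S_{\sigma_l}\circ H_\varepsilon(\psi)\le\bigodot_{r=1}^m(S_{\sigma_r}\circ H_{\varepsilon_r})(\phi)-\bigodot_{r=1}^m(S_{\sigma_r}\circ H_{\varepsilon_r})(\psi)\le H_\varepsilon\circ S_{\sigma_u}(\phi)-H_\varepsilon\circ S_{\sigma_u}(\psi).$$ If $U$ is dcpd then both inequalities hold with $\le$ replaced by $\ge$.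
   Context: A rise function is a smooth $U:[0,\infty)\to[0,\infty)$ with $U'>0$, $U(0)=0$, $U(1)=1$. $H_\varepsilon(\phi)=U^{-1}(U(\phi)+\varepsilon)$, $S_\sigma(\phi)=\phi+\sigma$, and $\bigodot_{r=1}^m(S_{\sigma_r}\circ H_{\varepsilon_r}):=S_{\sigma_m}\circ H_{\varepsilon_m}\circ\cdots\circ S_{\sigma_1}\circ H_{\varepsilon_1}$. Define $\Delta H(\phi,\Delta\phi,\varepsilon):=H_\varepsilon(\phi+\Delta\phi)-H_\varepsilon(\phi)$ on $\mathcal{D}=\{(\phi,\Delta\phi,\varepsilon):0\le\varepsilon\le1,\ 0\le\phi\le1,\ 0\le\Delta\phi\le U^{-1}(1-\varepsilon)-\phi\}$. $U$ is icpd (increasing the change of phase differences) if $\frac{\partial}{\partial\phi}\Delta H\ge0$ on $\mathcal{D}$, and dcpd (decreasing the change of phase differences) if $\frac{\partial}{\partial\phi}\Delta H\le0$ on $\mathcal{D}$. *)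

theory Defs
  imports "HOL-Analysis.Analysis"
begin

definition smooth_on_nonneg :: "(real \<Rightarrow> real) \<Rightarrow> bool" where
  "smooth_on_nonneg U \<longleftrightarrow>
     (\<exists>D :: nat \<Rightarrow> real \<Rightarrow> real.
        (\<forall>x\<ge>0. D 0 x = U x) \<and>
        (\<forall>k. \<forall>x\<ge>0. (D k has_real_derivative D (Suc k) x) (at x within {0..})))"

definition rise_function :: "(real \<Rightarrow> real) \<Rightarrow> bool" where
  "rise_function U \<longleftrightarrow>
     smooth_on_nonneg U \<and>
     (\<forall>x\<ge>0. U x \<ge> 0) \<and>
     (\<forall>x\<ge>0. \<forall>d. (U has_real_derivative d) (at x within {0..}) \<longrightarrow> d > 0) \<and>
     U 0 = 0 \<and> U 1 = 1"

definition Uinv :: "(real \<Rightarrow> real) \<Rightarrow> real \<Rightarrow> real" where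
  "Uinv U y = the_inv_into {0..} U y"

definition Hf :: "(real \<Rightarrow> real) \<Rightarrow> real \<Rightarrow> real \<Rightarrow> real" where
  "Hf U \<epsilon> \<phi> = Uinv U (U \<phi> + \<epsilon>)"

definition Sf :: "real \<Rightarrow> real \<Rightarrow> real" where
  "Sf \<sigma> \<phi> = \<phi> + \<sigma>"

fun compo :: "(real \<Rightarrow> real) \<Rightarrow> (nat \<Rightarrow> real) \<Rightarrow> (nat \<Rightarrow> real) \<Rightarrow> nat \<Rightarrow> real \<Rightarrow> real" where
  "compo U eps sig 0 \<phi> = \<phi>"
| "compo U eps sig (Suc r) \<phi> = Sf (sig (Suc r)) (Hf U (eps (Suc r)) (compo U eps sig r \<phi>))"

definition DeltaH :: "(real \<Rightarrow> real) \<Rightarrow> real \<Rightarrow> real \<Rightarrow> real \<Rightarrow> real" where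
  "DeltaH U \<phi> d \<epsilon> = Hf U \<epsilon> (\<phi> + d) - Hf U \<epsilon> \<phi>"

definition domD :: "(real \<Rightarrow> real) \<Rightarrow> (real \<times> real \<times> real) set" where
  "domD U = {(\<phi>, d, \<epsilon>). 0 \<le> \<epsilon> \<and> \<epsilon> \<le> 1 \<and> 0 \<le> \<phi> \<and> \<phi> \<le> 1 \<and> 0 \<le> d \<and> d \<le> Uinv U (1 - \<epsilon>) - \<phi>}"

text \<open>Partial derivative in phi, taken within the phi-slice of the domain D
  (one-sided at boundary points).\<close>
definition icpd :: "(real \<Rightarrow> real) \<Rightarrow> bool" where
  "icpd U \<longleftrightarrow> (\<forall>\<phi> d \<epsilon>. (\<phi>, d, \<epsilon>) \<in> domD U \<longrightarrow>
     (\<exists>D'. ((\<lambda>p. DeltaH U p d \<epsilon>) has_real_derivative D')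
              (at \<phi> within {p. (p, d, \<epsilon>) \<in> domD U}) \<and> D' \<ge> 0))"

definition dcpd :: "(real \<Rightarrow> real) \<Rightarrow> bool" where
  "dcpd U \<longleftrightarrow> (\<forall>\<phi> d \<epsilon>. (\<phi>, d, \<epsilon>) \<in> domD U \<longrightarrow>
     (\<exists>D'. ((\<lambda>p. DeltaH U p d \<epsilon>) has_real_derivative D')
              (at \<phi> within {p. (p, d, \<epsilon>) \<in> domD U}) \<and> D' \<le> 0))"

definition admissible :: "(real \<Rightarrow> real) \<Rightarrow> real \<Rightarrow> real \<Rightarrow> bool" where
  "admissible U x e \<longleftrightarrow> (x, 0, e) \<in> domD U"

end

theory Submission
  imports Defs
begin


lemma mono_from_deriv:
  fixes f :: "real \<Rightarrow> real"
  assumes pq: "p \<le> q" and sub: "{p..q} \<subseteq> S"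
    and der: "\<And>x. x \<in> {p..q} \<Longrightarrow> \<exists>D'. (f has_real_derivative D') (at x within S) \<and> D' \<ge> 0"
  shows "f p \<le> f q"
proof -
  have d2: "\<exists>D'. (f has_real_derivative D') (at x within {p..q}) \<and> D' \<ge> 0" if "x \<in> {p..q}" for x
    using der[OF that] DERIV_subset[OF _ sub] by blast
  have "continuous_on {p..q} f"
  proof -
    have "\<forall>x\<in>{p..q}. \<exists>D'. (f has_real_derivative D') (at x within {p..q})" using d2 by blast
    then obtain Df where "\<And>x. x\<in>{p..q} \<Longrightarrow> (f has_real_derivative Df x) (at x within {p..q})" by metis
    then show ?thesis by (rule DERIV_continuous_on)
  qed
  moreover have "\<exists>y. DERIV f x :> y \<and> y \<ge> 0" if "p < x" "x < q" for x
    using d2[of x] that at_within_Icc_at[OF that] by auto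
  ultimately show ?thesis using DERIV_nonneg_imp_increasing_open[OF pq] by blast
qed

lemma mono_from_deriv':
  fixes f :: "real \<Rightarrow> real"
  assumes pq: "p \<le> q" and sub: "{p..q} \<subseteq> S"
    and der: "\<And>x. x \<in> {p..q} \<Longrightarrow> \<exists>D'. (f has_real_derivative D') (at x within S) \<and> D' \<le> 0"
  shows "f q \<le> f p"
proof -
  have "(\<lambda>x. - f x) p \<le> (\<lambda>x. - f x) q"
  proof (rule mono_from_deriv[OF pq sub])
    fix x assume "x \<in> {p..q}"
    then obtain D' where "(f has_real_derivative D') (at x within S)" "D' \<le> 0" using der by blast
    show "\<exists>D'. ((\<lambda>x. - f x) has_real_derivative D') (at x within S) \<and> D' \<ge> 0"
      using \<open>(f has_real_derivative D') (at x within S)\<close> \<open>D' \<le> 0\<close> by (auto intro!: exI[of _ "-D'"] DERIV_minus)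
  qed
  then show ?thesis by simp
qed

context fixes U assumes rise: "rise_function U"
begin

lemma U_deriv: "x \<ge> 0 \<Longrightarrow> \<exists>d>0. (U has_real_derivative d) (at x within {0..})"
proof -
  assume x: "x \<ge> 0"
  from rise obtain D where D0: "\<forall>x\<ge>0. D 0 x = U x"
    and Dk: "\<forall>k. \<forall>x\<ge>0. (D k has_real_derivative D (Suc k) x) (at x within {0..})"
    and pos: "\<forall>x\<ge>0. \<forall>d. (U has_real_derivative d) (at x within {0..}) \<longrightarrow> d > 0"
    unfolding rise_function_def smooth_on_nonneg_def by blast
  have "(U has_real_derivative D 1 x) (at x within {0..})"
    apply (rule has_field_derivative_transform_within[where f="D 0" and d=1])
    using Dk x D0 by auto
  then show ?thesis using pos x by blast
qed

lemma U_cont: "continuous_on {0..} U"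
proof -
  have "\<forall>x\<in>{0..}. \<exists>d. (U has_real_derivative d) (at x within {0..})" using U_deriv by fastforce
  then obtain Df where "\<And>x. x\<in>{0..} \<Longrightarrow> (U has_real_derivative Df x) (at x within {0..})" by metis
  then show ?thesis by (rule DERIV_continuous_on)
qed

lemma U_smono: assumes "0 \<le> x" "x < y" shows "U x < U y"
proof -
  have "continuous_on {x..y} U" using U_cont continuous_on_subset assms by fastforce
  moreover have "\<exists>d. DERIV U z :> d \<and> d > 0" if "x < z" "z < y" for z
  proof -
    have z0: "0 \<le> z" using that assms by linarith
    obtain d where d: "d>0" "(U has_real_derivative d) (at z within {0..})" using U_deriv[OF z0] by auto
    have "at z within {0..} = at z" using that assms
      by (intro at_within_open_subset[of _ "{0<..}"]) auto
    then show ?thesis using d by auto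
  qed
  ultimately show ?thesis using DERIV_pos_imp_increasing_open[OF assms(2)] by blast
qed

lemma U_le_iff: "0 \<le> x \<Longrightarrow> 0 \<le> y \<Longrightarrow> U x \<le> U y \<longleftrightarrow> x \<le> y"
  using U_smono by (metis linorder_not_le order_le_less)

lemma U_less_iff: "0 \<le> x \<Longrightarrow> 0 \<le> y \<Longrightarrow> U x < U y \<longleftrightarrow> x < y"
  using U_le_iff by (meson linorder_not_le)

lemma U0: "U 0 = 0" and U1: "U 1 = 1" using rise unfolding rise_function_def by auto

lemma U_inj: "inj_on U {0..}"
  by (rule inj_onI) (metis U_le_iff atLeast_iff order_antisym order_refl)

lemma Uinv_U: "x \<ge> 0 \<Longrightarrow> Uinv U (U x) = x"
  unfolding Uinv_def using U_inj by (simp add: the_inv_into_f_f)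

lemma Uinv: assumes "0 \<le> y" "y \<le> 1" shows "0 \<le> Uinv U y \<and> Uinv U y \<le> 1 \<and> U (Uinv U y) = y"
proof -
  have "continuous_on {0..1} U" using U_cont continuous_on_subset by fastforce
  then obtain x where "0 \<le> x" "x \<le> 1" "U x = y" using IVT'[of U 0 y 1] assms U0 U1 by auto
  then show ?thesis using Uinv_U by auto
qed


lemma H_U: assumes "0 \<le> x" "0 \<le> e" "U x + e \<le> 1"
  shows "0 \<le> Hf U e x \<and> U (Hf U e x) = U x + e \<and> Hf U e x \<le> 1"
proof -
  have "0 \<le> U x" using U_le_iff[of 0 x] assms U0 by simp
  then show ?thesis using Uinv[of "U x + e"] assms unfolding Hf_def by auto
qed

lemma H_ge: assumes "0 \<le> x" "0 \<le> e" "U x + e \<le> 1" shows "x \<le> Hf U e x"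
  using H_U[OF assms] U_le_iff[of x "Hf U e x"] assms by auto

lemma H_mono: assumes "0 \<le> x" "x \<le> y" "0 \<le> e" "U y + e \<le> 1" shows "Hf U e x \<le> Hf U e y"
proof -
  have "U x \<le> U y" using U_le_iff assms by auto
  then show ?thesis using H_U[of x e] H_U[of y e] assms U_le_iff[of "Hf U e x" "Hf U e y"] by auto
qed

lemma H_smono: assumes "0 \<le> x" "x < y" "0 \<le> e" "U y + e \<le> 1" shows "Hf U e x < Hf U e y"
proof -
  have "U x < U y" using U_less_iff assms by auto
  then show ?thesis using H_U[of x e] H_U[of y e] assms U_less_iff[of "Hf U e x" "Hf U e y"] by auto
qed

lemma H_comp: assumes "0 \<le> x" "0 \<le> a" "0 \<le> b" "U x + a + b \<le> 1"
  shows "Hf U b (Hf U a x) = Hf U (a + b) x"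
  using H_U[of x a] assms unfolding Hf_def by (simp add: add.assoc)

lemma H0: "0 \<le> x \<Longrightarrow> Hf U 0 x = x"
  unfolding Hf_def using Uinv_U by simp

lemma H_inv: assumes "0 \<le> y" "U y \<le> 1" "0 \<le> e" "e \<le> U y"
  shows "\<exists>x\<ge>0. U x + e = U y \<and> Hf U e x = y"
proof -
  define x where "x = Uinv U (U y - e)"
  have "0 \<le> x" "U x = U y - e" using Uinv[of "U y - e"] assms unfolding x_def by auto
  then show ?thesis using Uinv_U assms unfolding Hf_def by (intro exI[of _ x]) auto
qed

lemma adm: assumes "admissible U x e"
  shows "0 \<le> e \<and> e \<le> 1 \<and> 0 \<le> x \<and> U x + e \<le> 1"
proof -
  have *: "0 \<le> e" "e \<le> 1" "0 \<le> x" "x \<le> Uinv U (1 - e)"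
    using assms unfolding admissible_def domD_def by auto
  then have "U x \<le> U (Uinv U (1 - e))" using Uinv[of "1-e"] U_le_iff[of x "Uinv U (1-e)"] by auto
  then show ?thesis using * Uinv[of "1-e"] by auto
qed

lemma slice: assumes "0 \<le> e" "e \<le> 1" "0 \<le> d" "0 \<le> x" "U (x + d) + e \<le> 1"
  shows "(x, d, e) \<in> domD U"
proof -
  have u: "U (Uinv U (1 - e)) = 1 - e" "0 \<le> Uinv U (1 - e)" using Uinv[of "1-e"] assms by auto
  have "x + d \<le> Uinv U (1 - e)" using U_le_iff[of "x+d" "Uinv U (1 - e)"] u assms by auto
  moreover have "x + d \<le> 1" using U_le_iff[of "x+d" 1] U1 assms U_le_iff[of 0 "x+d"] U0 by auto
  ultimately show ?thesis using assms unfolding domD_def by auto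
qed

lemma MI: assumes ic: "icpd U" and "0 \<le> e" "e \<le> 1" "0 \<le> p" "p \<le> q" "0 \<le> d" "U (q + d) + e \<le> 1"
  shows "Hf U e (p + d) - Hf U e p \<le> Hf U e (q + d) - Hf U e q"
proof -
  have "(\<lambda>t. DeltaH U t d e) p \<le> (\<lambda>t. DeltaH U t d e) q"
  proof (rule mono_from_deriv[of p q "{t. (t, d, e) \<in> domD U}" "\<lambda>t. DeltaH U t d e"])
    show "p \<le> q" by fact
    have "(t, d, e) \<in> domD U" if "t \<in> {p..q}" for t
    proof -
      have "U (t + d) + e \<le> 1" using that assms U_le_iff[of "t+d" "q+d"] by auto
      then show ?thesis using slice[of e d t] that assms by auto
    qed
    then show sub: "{p..q} \<subseteq> {t. (t, d, e) \<in> domD U}" by auto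
    fix x assume "x \<in> {p..q}"
    then show "\<exists>D'. ((\<lambda>t. DeltaH U t d e) has_real_derivative D') (at x within {t. (t, d, e) \<in> domD U}) \<and> D' \<ge> 0"
      using ic sub unfolding icpd_def by blast
  qed
  then show ?thesis unfolding DeltaH_def by simp
qed

lemma MD: assumes ic: "dcpd U" and "0 \<le> e" "e \<le> 1" "0 \<le> p" "p \<le> q" "0 \<le> d" "U (q + d) + e \<le> 1"
  shows "Hf U e (p + d) - Hf U e p \<ge> Hf U e (q + d) - Hf U e q"
proof -
  have "(\<lambda>t. DeltaH U t d e) q \<le> (\<lambda>t. DeltaH U t d e) p"
  proof (rule mono_from_deriv'[of p q "{t. (t, d, e) \<in> domD U}" "\<lambda>t. DeltaH U t d e"])
    show "p \<le> q" by fact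
    have "(t, d, e) \<in> domD U" if "t \<in> {p..q}" for t
    proof -
      have "U (t + d) + e \<le> 1" using that assms U_le_iff[of "t+d" "q+d"] by auto
      then show ?thesis using slice[of e d t] that assms by auto
    qed
    then show sub: "{p..q} \<subseteq> {t. (t, d, e) \<in> domD U}" by auto
    fix x assume "x \<in> {p..q}"
    then show "\<exists>D'. ((\<lambda>t. DeltaH U t d e) has_real_derivative D') (at x within {t. (t, d, e) \<in> domD U}) \<and> D' \<le> 0"
      using ic sub unfolding dcpd_def by blast
  qed
  then show ?thesis unfolding DeltaH_def by simp
qed

end



theorem mainTheorem5:
  fixes U :: "real \<Rightarrow> real" and m :: nat
    and eps sig :: "nat \<Rightarrow> real" and \<sigma>l \<sigma>u \<phi> \<psi> :: real
  assumes rise: "rise_function U"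
    and m: "m \<ge> 1"
    and eps_nn: "\<forall>r\<in>{1..m}. eps r \<ge> 0"
    and sig_nn: "\<forall>r\<in>{1..m}. sig r \<ge> 0"
    and \<sigma>l: "\<sigma>l \<ge> 0"
    and \<sigma>u: "\<sigma>u \<ge> 0"
    and upper: "compo U eps sig m \<phi> \<le> Hf U (\<Sum>r=1..m. eps r) (Sf \<sigma>u \<phi>)"
    and \<psi>\<phi>: "\<psi> \<le> \<phi>"
    and rng_chain: "\<forall>r\<in>{1..m}. admissible U (compo U eps sig (r - 1) \<phi>) (eps r)
                              \<and> admissible U (compo U eps sig (r - 1) \<psi>) (eps r)"
    and rng_H: "admissible U \<phi> (\<Sum>r=1..m. eps r) \<and> admissible U \<psi> (\<Sum>r=1..m. eps r)"
    and rng_HS: "admissible U (Sf \<sigma>u \<phi>) (\<Sum>r=1..m. eps r)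
               \<and> admissible U (Sf \<sigma>u \<psi>) (\<Sum>r=1..m. eps r)"
  shows "(icpd U \<longrightarrow>
            Sf \<sigma>l (Hf U (\<Sum>r=1..m. eps r) \<phi>) - Sf \<sigma>l (Hf U (\<Sum>r=1..m. eps r) \<psi>)
              \<le> compo U eps sig m \<phi> - compo U eps sig m \<psi>
          \<and> compo U eps sig m \<phi> - compo U eps sig m \<psi>
              \<le> Hf U (\<Sum>r=1..m. eps r) (Sf \<sigma>u \<phi>) - Hf U (\<Sum>r=1..m. eps r) (Sf \<sigma>u \<psi>))
       \<and> (dcpd U \<longrightarrow>
            Sf \<sigma>l (Hf U (\<Sum>r=1..m. eps r) \<phi>) - Sf \<sigma>l (Hf U (\<Sum>r=1..m. eps r) \<psi>)
              \<ge> compo U eps sig m \<phi> - compo U eps sig m \<psi>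
          \<and> compo U eps sig m \<phi> - compo U eps sig m \<psi>
              \<ge> Hf U (\<Sum>r=1..m. eps r) (Sf \<sigma>u \<phi>) - Hf U (\<Sum>r=1..m. eps r) (Sf \<sigma>u \<psi>))"
proof -
  define E where "E r = (\<Sum>i=1..r. eps i)" for r
  define c where "c r x = compo U eps sig r x" for r x
  define H where "H e x = Hf U e x" for e x
  note UL = U_le_iff[OF rise]
  have cS: "c (Suc r) x = H (eps (Suc r)) (c r x) + sig (Suc r)" for r x
    unfolding c_def H_def by (simp add: Sf_def)
  have ES: "E (Suc r) = E r + eps (Suc r)" for r unfolding E_def by simp
  have E0: "E 0 = 0" unfolding E_def by simp
  have Enn: "r \<le> m \<Longrightarrow> 0 \<le> E r" for r unfolding E_def using eps_nn by (intro sum_nonneg) auto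
  have Ele: "r \<le> m \<Longrightarrow> E r \<le> E m" for r unfolding E_def using eps_nn
    by (intro sum_mono2) auto
  have ph: "0 \<le> E m" "E m \<le> 1" "0 \<le> \<phi>" "U \<phi> + E m \<le> 1"
    using adm[OF rise] rng_H unfolding E_def by auto
  have ps: "0 \<le> \<psi>" "U \<psi> + E m \<le> 1"
    using adm[OF rise] rng_H unfolding E_def by auto
  have phu: "U (\<phi> + \<sigma>u) + E m \<le> 1"
    using adm[OF rise] rng_HS unfolding E_def Sf_def by auto
  have ch: "0 \<le> eps (Suc r) \<and> eps (Suc r) \<le> 1 \<and> 0 \<le> c r \<phi> \<and> U (c r \<phi>) + eps (Suc r) \<le> 1
     \<and> 0 \<le> c r \<psi> \<and> U (c r \<psi>) + eps (Suc r) \<le> 1" if "r < m" for r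
    using rng_chain[rule_format, of "Suc r"] adm[OF rise] that unfolding c_def by auto
  have sg: "r < m \<Longrightarrow> 0 \<le> sig (Suc r)" for r using sig_nn by auto
  have U0: "U 0 = 0" "U 1 = 1" using rise unfolding rise_function_def by auto
  have Upos: "0 \<le> x \<Longrightarrow> 0 \<le> U x" for x using UL[of 0 x] U0 by simp
  have Hge: "\<And>x e. 0 \<le> x \<Longrightarrow> 0 \<le> e \<Longrightarrow> U x + e \<le> 1 \<Longrightarrow> x \<le> H e x"
    unfolding H_def using H_ge[OF rise] by blast
  have HU: "\<And>x e. 0 \<le> x \<Longrightarrow> 0 \<le> e \<Longrightarrow> U x + e \<le> 1 \<Longrightarrow> 0 \<le> H e x \<and> U (H e x) = U x + e \<and> H e x \<le> 1"
    unfolding H_def using H_U[OF rise] by blast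
  have Hm: "\<And>x y e. 0 \<le> x \<Longrightarrow> x \<le> y \<Longrightarrow> 0 \<le> e \<Longrightarrow> U y + e \<le> 1 \<Longrightarrow> H e x \<le> H e y"
    unfolding H_def using H_mono[OF rise] by blast
  have Hsm: "\<And>x y e. 0 \<le> x \<Longrightarrow> x < y \<Longrightarrow> 0 \<le> e \<Longrightarrow> U y + e \<le> 1 \<Longrightarrow> H e x < H e y"
    unfolding H_def using H_smono[OF rise] by blast
  have Hc: "\<And>x a b. 0 \<le> x \<Longrightarrow> 0 \<le> a \<Longrightarrow> 0 \<le> b \<Longrightarrow> U x + a + b \<le> 1 \<Longrightarrow> H b (H a x) = H (a + b) x"
    unfolding H_def using H_comp[OF rise] by blast
  have H0': "\<And>x. 0 \<le> x \<Longrightarrow> H 0 x = x" unfolding H_def using H0[OF rise] by blast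
  have Hinv: "\<And>y e. 0 \<le> y \<Longrightarrow> U y \<le> 1 \<Longrightarrow> 0 \<le> e \<Longrightarrow> e \<le> U y \<Longrightarrow> \<exists>x\<ge>0. U x + e = U y \<and> H e x = y"
    unfolding H_def using H_inv[OF rise] by blast
  have MI': "\<And>e p q d. icpd U \<Longrightarrow> 0 \<le> e \<Longrightarrow> e \<le> 1 \<Longrightarrow> 0 \<le> p \<Longrightarrow> p \<le> q \<Longrightarrow> 0 \<le> d \<Longrightarrow> U (q + d) + e \<le> 1
     \<Longrightarrow> H e (p + d) - H e p \<le> H e (q + d) - H e q"
    unfolding H_def using MI[OF rise] by blast
  have MD': "\<And>e p q d. dcpd U \<Longrightarrow> 0 \<le> e \<Longrightarrow> e \<le> 1 \<Longrightarrow> 0 \<le> p \<Longrightarrow> p \<le> q \<Longrightarrow> 0 \<le> d \<Longrightarrow> U (q + d) + e \<le> 1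
     \<Longrightarrow> H e (p + d) - H e p \<ge> H e (q + d) - H e q"
    unfolding H_def using MD[OF rise] by blast

  have E1: "E m \<le> 1" by fact
  have psphi: "U \<psi> \<le> U \<phi>" using UL ps ph \<psi>\<phi> by auto

  have L: "r \<le> m \<Longrightarrow> H (E r) \<psi> \<le> c r \<psi> \<and> H (E r) \<phi> \<le> c r \<phi> \<and> c r \<psi> \<le> c r \<phi>
     \<and> (icpd U \<longrightarrow> H (E r) \<phi> - H (E r) \<psi> \<le> c r \<phi> - c r \<psi>)
     \<and> (dcpd U \<longrightarrow> H (E r) \<phi> - H (E r) \<psi> \<ge> c r \<phi> - c r \<psi>)" for r
  proof (induction r)
    case 0
    then show ?case using H0' ph ps \<psi>\<phi> unfolding E0 c_def by simp
  next
    case (Suc r)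
    then have rm: "r < m" by simp
    note IH = Suc.IH[OF less_imp_le[OF rm]]
    define \<epsilon> where "\<epsilon> = eps (Suc r)"
    define \<sigma> where "\<sigma> = sig (Suc r)"
    define a where "a = c r \<psi>"
    define A where "A = c r \<phi>"
    define b where "b = H (E r) \<psi>"
    define B where "B = H (E r) \<phi>"
    have ch': "0 \<le> \<epsilon>" "\<epsilon> \<le> 1" "0 \<le> A" "U A + \<epsilon> \<le> 1" "0 \<le> a" "U a + \<epsilon> \<le> 1"
      using ch[OF rm] unfolding \<epsilon>_def a_def A_def by auto
    have \<sigma>0: "0 \<le> \<sigma>" using sg[OF rm] \<sigma>_def by simp
    have Er: "0 \<le> E r" "E r + \<epsilon> \<le> E m" using Enn[of r] Ele[of "Suc r"] rm ES \<epsilon>_def by auto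
    have ba: "b \<le> a" "B \<le> A" "a \<le> A" using IH a_def A_def b_def B_def by auto
    have b0: "0 \<le> b" using Hge[of \<psi> "E r"] ps Er ch' unfolding b_def by auto
    have bB: "b \<le> B" using Hm[of \<psi> \<phi> "E r"] ps ph Er \<psi>\<phi> ch' unfolding b_def B_def by auto
    have Hb: "H (E (Suc r)) \<psi> = H \<epsilon> b" using Hc[of \<psi> "E r" \<epsilon>] ps Er ch' ch' unfolding b_def ES \<epsilon>_def by auto
    have HB: "H (E (Suc r)) \<phi> = H \<epsilon> B" using Hc[of \<phi> "E r" \<epsilon>] ph Er ch' ch' unfolding B_def ES \<epsilon>_def by auto
    have cs: "c (Suc r) \<psi> = H \<epsilon> a + \<sigma>" "c (Suc r) \<phi> = H \<epsilon> A + \<sigma>"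
      unfolding cS a_def A_def \<epsilon>_def \<sigma>_def by auto
    have g1: "H \<epsilon> b \<le> H \<epsilon> a" using Hm[of b a \<epsilon>] b0 ba ch' by auto
    have g2: "H \<epsilon> B \<le> H \<epsilon> A" using Hm[of B A \<epsilon>] b0 bB ba ch' by auto
    have g3: "H \<epsilon> a \<le> H \<epsilon> A" using Hm[of a A \<epsilon>] ba ch' by auto
    have ic: "H \<epsilon> B - H \<epsilon> b \<le> H \<epsilon> A - H \<epsilon> a" if icp: "icpd U"
    proof -
      have dD: "B - b \<le> A - a" using IH icp unfolding a_def A_def b_def B_def by auto
      have "U (a + (B - b)) \<le> U A" using UL[of "a + (B - b)" A] dD ch' bB by auto
      then have "H \<epsilon> (b + (B - b)) - H \<epsilon> b \<le> H \<epsilon> (a + (B - b)) - H \<epsilon> a"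
        using MI'[OF icp, of \<epsilon> b a "B - b"] ch' b0 ba bB by auto
      moreover have "H \<epsilon> (a + (B - b)) \<le> H \<epsilon> A" using Hm[of "a + (B - b)" A \<epsilon>] dD ch' bB by auto
      ultimately show ?thesis by simp
    qed
    have dc: "H \<epsilon> B - H \<epsilon> b \<ge> H \<epsilon> A - H \<epsilon> a" if dcp: "dcpd U"
    proof -
      have dD: "B - b \<ge> A - a" using IH dcp unfolding a_def A_def b_def B_def by auto
      define p where "p = B - (A - a)"
      have p: "b \<le> p" "p \<le> a" using dD ba unfolding p_def by auto
      have "H \<epsilon> (p + (A - a)) - H \<epsilon> p \<ge> H \<epsilon> (a + (A - a)) - H \<epsilon> a"
        using MD'[OF dcp, of \<epsilon> p a "A - a"] ch' b0 ba p by auto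
      moreover have "H \<epsilon> b \<le> H \<epsilon> p" using Hm[of b p \<epsilon>] p b0 ch' UL[of p a] by auto
      ultimately show ?thesis unfolding p_def by simp
    qed
    show ?case unfolding Hb HB cs using g1 g2 g3 ic dc \<sigma>0 by auto
  qed

  have cm1: "U (c m \<phi>) \<le> 1"
  proof -
    have "c m \<phi> \<le> H (E m) (\<phi> + \<sigma>u)" using upper unfolding c_def H_def E_def Sf_def by simp
    also have "\<dots> \<le> 1" using HU[of "\<phi> + \<sigma>u" "E m"] ph phu \<sigma>u by auto
    finally have "c m \<phi> \<le> 1" .
    moreover have "0 \<le> c m \<phi>" using L[of m] HU[of \<phi> "E m"] ph by auto
    ultimately show ?thesis using UL[of "c m \<phi>" 1] U0 by auto
  qed
  have cr1: "r \<le> m \<Longrightarrow> U (c r \<phi>) \<le> 1" for r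
  proof (cases "r = m")
    case False
    assume "r \<le> m"
    then have "r < m" using False by simp
    then show ?thesis using ch[of r] by auto
  qed (use cm1 in auto)
  have Up: "r \<le> m \<Longrightarrow> \<exists>s\<ge>0. c r \<phi> = H (E r) (\<phi> + s) \<and> U (\<phi> + s) + E r \<le> 1
      \<and> (icpd U \<longrightarrow> H (E r) (\<psi> + s) \<le> c r \<psi>) \<and> (dcpd U \<longrightarrow> c r \<psi> \<le> H (E r) (\<psi> + s))" for r
  proof (induction r)
    case 0
    then show ?case using H0' ph ps \<psi>\<phi> unfolding E0 c_def by (intro exI[of _ 0]) auto
  next
    case (Suc r)
    then have rm: "r < m" by simp
    obtain s where s: "s \<ge> 0" "c r \<phi> = H (E r) (\<phi> + s)" "U (\<phi> + s) + E r \<le> 1"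
      "icpd U \<Longrightarrow> H (E r) (\<psi> + s) \<le> c r \<psi>" "dcpd U \<Longrightarrow> c r \<psi> \<le> H (E r) (\<psi> + s)"
      using Suc.IH rm by auto
    define \<epsilon> where "\<epsilon> = eps (Suc r)"
    define \<sigma> where "\<sigma> = sig (Suc r)"
    define E' where "E' = E (Suc r)"
    have ch': "0 \<le> \<epsilon>" "\<epsilon> \<le> 1" "0 \<le> c r \<phi>" "U (c r \<phi>) + \<epsilon> \<le> 1" "0 \<le> c r \<psi>" "U (c r \<psi>) + \<epsilon> \<le> 1"
      using ch[OF rm] unfolding \<epsilon>_def by auto
    have \<sigma>0: "0 \<le> \<sigma>" using sg[OF rm] \<sigma>_def by simp
    have Er: "0 \<le> E r" "E' = E r + \<epsilon>" "E' \<le> E m" using Enn[of r] Ele[of "Suc r"] rm ES \<epsilon>_def E'_def by auto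
    have phs0: "0 \<le> \<phi> + s" using ph s by auto
    have HUs: "U (H (E r) (\<phi> + s)) = U (\<phi> + s) + E r" using HU[OF phs0 Er(1) s(3)] by auto
    have phsE: "U (\<phi> + s) + E' \<le> 1" using HUs s(2) ch' Er by auto
    have psE: "U (\<psi> + s) \<le> U (\<phi> + s)" using UL[of "\<psi>+s" "\<phi>+s"] ps s \<psi>\<phi> by auto
    define y where "y = c (Suc r) \<phi>"
    have Hph: "H \<epsilon> (H (E r) (\<phi> + s)) = H E' (\<phi> + s)"
      using Hc[OF phs0 Er(1) ch'(1)] phsE Er(2) by simp
    have y: "y = H E' (\<phi> + s) + \<sigma>"
      using Hph unfolding y_def cS \<epsilon>_def \<sigma>_def s(2) by simp
    have HUs': "0 \<le> H E' (\<phi> + s) \<and> U (H E' (\<phi> + s)) = U (\<phi> + s) + E'"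
      using HU[OF phs0 _ phsE] Er ch' by auto
    have y0: "0 \<le> y" using y HUs' \<sigma>0 by auto
    have y1: "U y \<le> 1" using cr1[of "Suc r"] Suc.prems unfolding y_def by auto
    have Ey: "E' \<le> U y"
    proof -
      have "U (H E' (\<phi> + s)) \<le> U y" using UL[of "H E' (\<phi> + s)" y] HUs' y \<sigma>0 y0 by auto
      then show ?thesis using HUs' Upos[OF phs0] by auto
    qed
    obtain x where x: "x \<ge> 0" "U x + E' = U y" "H E' x = y" using Hinv[OF y0 y1 _ Ey] Er ch' by auto
    have xs: "\<phi> + s \<le> x"
    proof (rule ccontr)
      assume "\<not> \<phi> + s \<le> x"
      then have "H E' x < H E' (\<phi> + s)" using Hsm[of x "\<phi> + s" E'] x phsE Er ch' by auto
      then show False using x y \<sigma>0 by auto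
    qed
    define s' where "s' = x - \<phi>"
    have s': "s' \<ge> 0" "x = \<phi> + s'" "s \<le> s'" using xs s unfolding s'_def by auto
    have xE: "U (\<phi> + s + (s' - s)) + E' \<le> 1" using x y1 s' by auto
    have ps0: "0 \<le> \<psi> + s" using ps s by auto
    have Hps: "H \<epsilon> (H (E r) (\<psi> + s)) = H E' (\<psi> + s)"
      using Hc[OF ps0 Er(1) ch'(1)] psE phsE Er by auto
    have Hps0: "0 \<le> H (E r) (\<psi> + s)" "U (H (E r) (\<psi> + s)) = U (\<psi> + s) + E r"
      using HU[OF ps0 Er(1)] psE s(3) by auto
    have cpsi: "c (Suc r) \<psi> = H \<epsilon> (c r \<psi>) + \<sigma>" unfolding cS \<epsilon>_def \<sigma>_def by simp
    have ic: "H E' (\<psi> + s') \<le> c (Suc r) \<psi>" if icp: "icpd U"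
    proof -
      have "H \<epsilon> (H (E r) (\<psi> + s)) \<le> H \<epsilon> (c r \<psi>)"
        using Hm[OF Hps0(1) s(4)[OF icp] ch'(1)] ch' by auto
      moreover have "H E' (\<psi> + s + (s' - s)) - H E' (\<psi> + s) \<le> H E' (\<phi> + s + (s' - s)) - H E' (\<phi> + s)"
        using MI'[OF icp, of E' "\<psi> + s" "\<phi> + s" "s' - s"] Er E1 ch' ps0 \<psi>\<phi> s' xE by auto
      ultimately show ?thesis using cpsi Hps x s' y by (simp add: algebra_simps)
    qed
    have dc: "c (Suc r) \<psi> \<le> H E' (\<psi> + s')" if dcp: "dcpd U"
    proof -
      have "H \<epsilon> (c r \<psi>) \<le> H \<epsilon> (H (E r) (\<psi> + s))"
        using Hm[OF ch'(5) s(5)[OF dcp] ch'(1)] Hps0 psE phsE Er by auto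
      moreover have "H E' (\<psi> + s + (s' - s)) - H E' (\<psi> + s) \<ge> H E' (\<phi> + s + (s' - s)) - H E' (\<phi> + s)"
        using MD'[OF dcp, of E' "\<psi> + s" "\<phi> + s" "s' - s"] Er E1 ch' ps0 \<psi>\<phi> s' xE by auto
      ultimately show ?thesis using cpsi Hps x s' y by (simp add: algebra_simps)
    qed
    show ?case
      apply (rule exI[of _ s'])
      using s' x y_def ic dc E'_def y1 by auto
  qed
  obtain s where s: "s \<ge> 0" "c m \<phi> = H (E m) (\<phi> + s)" "U (\<phi> + s) + E m \<le> 1"
      "icpd U \<Longrightarrow> H (E m) (\<psi> + s) \<le> c m \<psi>" "dcpd U \<Longrightarrow> c m \<psi> \<le> H (E m) (\<psi> + s)"
    using Up[of m] by auto
  have su: "s \<le> \<sigma>u"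
  proof (rule ccontr)
    assume "\<not> s \<le> \<sigma>u"
    then have "H (E m) (\<phi> + \<sigma>u) < H (E m) (\<phi> + s)" using Hsm[of "\<phi> + \<sigma>u" "\<phi> + s" "E m"] ph \<sigma>u s by auto
    then show False using upper s(2) unfolding c_def H_def E_def Sf_def by simp
  qed
  have ps0: "0 \<le> \<psi> + s" using ps s by auto
  have up_ic: "c m \<phi> - c m \<psi> \<le> H (E m) (\<phi> + \<sigma>u) - H (E m) (\<psi> + \<sigma>u)" if icp: "icpd U"
  proof -
    have "H (E m) (\<psi> + s + (\<phi> - \<psi>)) - H (E m) (\<psi> + s) \<le> H (E m) (\<psi> + \<sigma>u + (\<phi> - \<psi>)) - H (E m) (\<psi> + \<sigma>u)"
      using MI'[OF icp, of "E m" "\<psi> + s" "\<psi> + \<sigma>u" "\<phi> - \<psi>"] ph ps0 su \<psi>\<phi> phu by (auto simp: algebra_simps)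
    then show ?thesis using s(2) s(4)[OF icp] by (simp add: algebra_simps)
  qed
  have up_dc: "c m \<phi> - c m \<psi> \<ge> H (E m) (\<phi> + \<sigma>u) - H (E m) (\<psi> + \<sigma>u)" if dcp: "dcpd U"
  proof -
    have "H (E m) (\<psi> + s + (\<phi> - \<psi>)) - H (E m) (\<psi> + s) \<ge> H (E m) (\<psi> + \<sigma>u + (\<phi> - \<psi>)) - H (E m) (\<psi> + \<sigma>u)"
      using MD'[OF dcp, of "E m" "\<psi> + s" "\<psi> + \<sigma>u" "\<phi> - \<psi>"] ph ps0 su \<psi>\<phi> phu by (auto simp: algebra_simps)
    then show ?thesis using s(2) s(5)[OF dcp] by (simp add: algebra_simps)
  qed
  note Lm = L[of m, OF order_refl]
  have eqs: "Hf U (\<Sum>r=1..m. eps r) = H (E m)" "compo U eps sig m = c m"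
    by (auto simp: H_def E_def c_def fun_eq_iff)
  show ?thesis unfolding eqs Sf_def using Lm up_ic up_dc by auto
qed


end
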